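(* Consider binary variables $Y,X_M,X_1\in\{0,1\}$ with DAG $Y\to X_M$, $Y\to X_1$, $X_M\to X_1$, where $X_1$ is stable (its mechanism $P(X_1\mid X_M,Y)$ and $P(Y)$ are the same in all environments) and $X_M$ is mutable (its mechanism $P^e(X_M\mid Y)$ may be arbitrary in environment $e$). Let $\mathcal{E}$ be the set of all such environments. Then there exist $P(Y)$ and $P(X_1\mid X_M,Y)$ such that $\max_{e\in\mathcal{E}}\mathbb{E}_{P^e}[(Y-f_S(\mathbf{X}))^2]>\max_{e\in\mathcal{E}}\mathbb{E}_{P^e}[(Y-f_\emptyset(\mathbf{X}))^2]$, where $f_S(\boldsymbol x):=\mathbb{E}[Y\mid x_1,do(x_M)]$ and $f_\emptyset(\boldsymbol x):=\mathbb{E}[Y\mid do(x_M)]$.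
   Context: Interventional distributions are defined by truncated factorization: $P(Y,X_1\mid do(X_M=x_M))=P(Y)P(X_1\mid x_M,Y)$, so $\mathbb{E}[Y\mid x_1,do(x_M)]=\frac{P(Y=1)P(x_1\mid x_M,Y=1)}{\sum_{y}P(y)P(x_1\mid x_M,y)}$ and $\mathbb{E}[Y\mid do(x_M)]=\mathbb{E}[Y]$. *)

theory Defs
  imports Complex_Main
begin

text \<open>Binary variables take values in {0,1} (as nat).
  bern a v = probability of value v for a Bernoulli(a) variable.\<close>
definition bern :: "real \<Rightarrow> nat \<Rightarrow> real" where
  "bern a v = (if v = 1 then a else 1 - a)"

text \<open>Stable parameters: pY = P(Y=1); q xm y = P(X1=1 | X_M=xm, Y=y).
  Environment r: r y = P^e(X_M=1 | Y=y).
  Joint distribution P^e(Y=y, X_M=xm, X_1=x1) by the DAG factorization.\<close>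
definition joint :: "real \<Rightarrow> (nat \<Rightarrow> nat \<Rightarrow> real) \<Rightarrow> (nat \<Rightarrow> real) \<Rightarrow> nat \<Rightarrow> nat \<Rightarrow> nat \<Rightarrow> real" where
  "joint pY q r y xm x1 = bern pY y * bern (r y) xm * bern (q xm y) x1"

definition envs :: "(nat \<Rightarrow> real) set" where
  "envs = {r. \<forall>y\<in>{0,1}. 0 \<le> r y \<and> r y \<le> 1}"

text \<open>f_S(x) = E[Y | x1, do(xm)] by truncated factorization.\<close>
definition fS :: "real \<Rightarrow> (nat \<Rightarrow> nat \<Rightarrow> real) \<Rightarrow> nat \<Rightarrow> nat \<Rightarrow> real" where
  "fS pY q xm x1 = bern pY 1 * bern (q xm 1) x1 / (\<Sum>y\<in>{0,1}. bern pY y * bern (q xm y) x1)"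

text \<open>f_empty(x) = E[Y | do(xm)] = E[Y].\<close>
definition fE :: "real \<Rightarrow> nat \<Rightarrow> nat \<Rightarrow> real" where
  "fE pY xm x1 = (\<Sum>y\<in>{0,1}. real y * bern pY y)"

definition risk :: "real \<Rightarrow> (nat \<Rightarrow> nat \<Rightarrow> real) \<Rightarrow> (nat \<Rightarrow> real) \<Rightarrow> (nat \<Rightarrow> nat \<Rightarrow> real) \<Rightarrow> real" where
  "risk pY q r f = (\<Sum>y\<in>{0,1}. \<Sum>xm\<in>{0,1}. \<Sum>x1\<in>{0,1}.
      joint pY q r y xm x1 * (real y - f xm x1)^2)"

end

theory Submission
  imports Defs
begin

definition qq :: "nat \<Rightarrow> nat \<Rightarrow> real" where
  "qq xm y = (if xm = 0 then (if y = 1 then 1 else 1/3) else 0)"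

lemma riskS: "risk (1/4) qq r (fS (1/4) qq) = (3/4) * ((1 - r 0) * (1/12) + r 0 * (1/16)) + (1/4) * ((1 - r 1) * (1/4) + r 1 * (9/16))"
  by (simp add: risk_def joint_def bern_def fS_def qq_def power2_eq_square) (simp add: field_simps)

lemma riskE: "risk (1/4) qq r (fE (1/4)) = 3/16"
  by (simp add: risk_def joint_def bern_def fE_def qq_def power2_eq_square) (simp add: field_simps)

theorem mainTheorem3:
  shows "\<exists>pY q. 0 \<le> pY \<and> pY \<le> 1 \<and>
     (\<forall>xm\<in>{0,1}. \<forall>y\<in>{0,1}. 0 \<le> q xm y \<and> q xm y \<le> (1::real)) \<and>
     (SUP r\<in>envs. risk pY q r (fS pY q)) > (SUP r\<in>envs. risk pY q r (fE pY))"
proof (intro exI conjI)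
  define r0 :: "nat \<Rightarrow> real" where "r0 = (\<lambda>y. if y = 0 then 0 else 1)"
  have r0: "r0 \<in> envs" by (simp add: envs_def r0_def)
  have E: "(SUP r\<in>envs. risk (1/4) qq r (fE (1/4))) = 3/16"
    using r0 unfolding riskE by (subst cSUP_const) auto
  have bdd: "bdd_above ((\<lambda>r. risk (1/4) qq r (fS (1/4) qq)) ` envs)"
  proof (rule bdd_aboveI2)
    fix r assume "r \<in> envs"
    then have "0 \<le> r 0" "r 0 \<le> 1" "0 \<le> r 1" "r 1 \<le> 1" by (auto simp: envs_def)
    then show "risk (1/4) qq r (fS (1/4) qq) \<le> 1" unfolding riskS by (simp add: field_simps)
  qed
  have "risk (1/4) qq r0 (fS (1/4) qq) \<le> (SUP r\<in>envs. risk (1/4) qq r (fS (1/4) qq))"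
    by (rule cSUP_upper[OF r0 bdd])
  moreover have "risk (1/4) qq r0 (fS (1/4) qq) = 13/64" unfolding riskS by (simp add: r0_def)
  ultimately show "(SUP r\<in>envs. risk (1/4) qq r (fS (1/4) qq)) > (SUP r\<in>envs. risk (1/4) qq r (fE (1/4)))"
    unfolding E by linarith
qed (auto simp: qq_def)

end
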